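(* Let $n\ge3$ and let $X_n$ be a connected Coxeter graph with $n$ vertices of one of the types $A_n$, $B_n$, $D_n$, $F_4$, $H_3$, $H_4$. Then the maps $y_i\mapsto x_i$ and $x_i\mapsto x_i$ define surjective length-preserving monoid homomorphisms $$K^{\infty}_n \xrightarrow{\ \phi\ } \mathcal{X}^{\infty}_n \xrightarrow{\ \psi\ } \mathcal{X}^{+}_n .$$
   Context: Coxeter graphs and the types: $A_n$ is the path $x_1-\cdots-x_n$ with all labels $3$; $B_n$ the same path with edge $x_{n-1}x_n$ labeled $4$; $D_n$ ($n\ge4$) is the path $x_1-\cdots-x_{n-2}$ with $x_{n-1}$ and $x_n$ both joined to $x_{n-2}$ (labels $3$); $F_4$ is the path $x_1-x_2-x_3-x_4$ with $x_2x_3$ labeled $4$; $H_3,H_4$ are paths on $3$, resp. $4$ vertices with $x_1x_2$ labeled $5$. For a graph with labels $r_{ij}$ ($r_{ij}=2$ if no edge), $\mathcal{X}^{+}_n=\langle x_1,\dots,x_n\mid x_ix_jx_i\cdots=x_jx_ix_j\cdots$ (both sides of length $r_{ij}$)$\rangle$ is the Artin monoid, and $\mathcal{X}^{\infty}_n$ is the associated right-angled monoid obtained by replacing every label $\ge3$ by $\infty$, i.e. $\mathcal{X}^{\infty}_n=\langle x_1,\dots,x_n\mid x_ix_j=x_jx_i \text{ whenever } x_i,x_j \text{ are not joined by an edge}\rangle$. For $n\ge3$, $K^{\infty}_n=\langle y_1,\dots,y_n\mid y_iy_j=y_jy_i\ (j+2\le i\le n-1),\ y_ny_k=y_ky_n\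 (1\le k\le n-3)\rangle$. *)

theory Defs
  imports "HOL-Algebra.Group"
begin

text \<open>Words are lists of generator indices; generators are indexed 1..n.
  The congruence generated by a set of relations R (pairs of words).\<close>

inductive pres_eq :: "(nat list \<times> nat list) set \<Rightarrow> nat list \<Rightarrow> nat list \<Rightarrow> bool"
  for R where
  pres_refl: "pres_eq R w w"
| pres_rel: "(u, v) \<in> R \<Longrightarrow> pres_eq R (p @ u @ s) (p @ v @ s)"
| pres_sym: "pres_eq R u v \<Longrightarrow> pres_eq R v u"
| pres_trans: "pres_eq R u v \<Longrightarrow> pres_eq R v w \<Longrightarrow> pres_eq R u w"

definition cls :: "(nat list \<times> nat list) set \<Rightarrow> nat list \<Rightarrow> nat list set" where
  "cls R w = {v. pres_eq R w v}"

definition rep :: "nat list set \<Rightarrow> nat list" where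
  "rep C = (SOME w. w \<in> C)"

definition pres_monoid :: "nat \<Rightarrow> (nat list \<times> nat list) set \<Rightarrow> nat list set monoid" where
  "pres_monoid n R =
     \<lparr> carrier = {cls R w | w. set w \<subseteq> {1..n}},
       mult = (\<lambda>C D. cls R (rep C @ rep D)),
       one = cls R [] \<rparr>"

text \<open>Length of an element (well defined for homogeneous relations).\<close>
definition elem_len :: "nat list set \<Rightarrow> nat" where
  "elem_len C = length (rep C)"

datatype cox_type = TA nat | TB nat | TD nat | TF4 | TH3 | TH4

fun rank :: "cox_type \<Rightarrow> nat" where
  "rank (TA n) = n" | "rank (TB n) = n" | "rank (TD n) = n"
| "rank TF4 = 4" | "rank TH3 = 3" | "rank TH4 = 4"

text \<open>Label of the (directed) edge i--j for i<j; 2 means no edge.\<close>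
fun lab0 :: "cox_type \<Rightarrow> nat \<Rightarrow> nat \<Rightarrow> nat" where
  "lab0 (TA n) i j = (if 1 \<le> i \<and> j = i + 1 \<and> j \<le> n then 3 else 2)"
| "lab0 (TB n) i j = (if 1 \<le> i \<and> j = i + 1 \<and> j \<le> n then (if j = n then 4 else 3) else 2)"
| "lab0 (TD n) i j = (if (1 \<le> i \<and> j = i + 1 \<and> j \<le> n - 2) \<or> (i = n - 2 \<and> (j = n - 1 \<or> j = n))
                        then 3 else 2)"
| "lab0 TF4 i j = (if (i, j) = (1, 2) \<or> (i, j) = (3, 4) then 3 else if (i, j) = (2, 3) then 4 else 2)"
| "lab0 TH3 i j = (if (i, j) = (1, 2) then 5 else if (i, j) = (2, 3) then 3 else 2)"
| "lab0 TH4 i j = (if (i, j) = (1, 2) then 5 else if (i, j) = (2, 3) \<or> (i, j) = (3, 4) then 3 else 2)"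

definition lab :: "cox_type \<Rightarrow> nat \<Rightarrow> nat \<Rightarrow> nat" where
  "lab T i j = (if i < j then lab0 T i j else lab0 T j i)"

fun alt :: "nat \<Rightarrow> nat \<Rightarrow> nat \<Rightarrow> nat list" where
  "alt i j 0 = []"
| "alt i j (Suc r) = i # alt j i r"

definition artin_rels :: "cox_type \<Rightarrow> (nat list \<times> nat list) set" where
  "artin_rels T = {(alt i j (lab T i j), alt j i (lab T i j)) | i j.
      i \<in> {1..rank T} \<and> j \<in> {1..rank T} \<and> i \<noteq> j}"

definition ra_rels :: "cox_type \<Rightarrow> (nat list \<times> nat list) set" where
  "ra_rels T = {([i, j], [j, i]) | i j.
      i \<in> {1..rank T} \<and> j \<in> {1..rank T} \<and> i \<noteq> j \<and> lab T i j = 2}"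

definition K_rels :: "nat \<Rightarrow> (nat list \<times> nat list) set" where
  "K_rels n = {([i, j], [j, i]) | i j. 1 \<le> j \<and> j + 2 \<le> i \<and> i \<le> n - 1}
            \<union> {([n, k], [k, n]) | k. 1 \<le> k \<and> k + 3 \<le> n}"

definition artin_monoid :: "cox_type \<Rightarrow> nat list set monoid" where
  "artin_monoid T = pres_monoid (rank T) (artin_rels T)"

definition ra_monoid :: "cox_type \<Rightarrow> nat list set monoid" where
  "ra_monoid T = pres_monoid (rank T) (ra_rels T)"

definition K_monoid :: "nat \<Rightarrow> nat list set monoid" where
  "K_monoid n = pres_monoid n (K_rels n)"

definition allowed_type :: "cox_type \<Rightarrow> bool" where
  "allowed_type T = (case T of TA n \<Rightarrow> n \<ge> 3 | TB n \<Rightarrow> n \<ge> 3 | TD n \<Rightarrow> n \<ge> 4 | _ \<Rightarrow> True)"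

definition gen_hom :: "nat \<Rightarrow> nat list set monoid \<Rightarrow> nat list set monoid
                       \<Rightarrow> (nat list set \<Rightarrow> nat list set) \<Rightarrow> bool" where
  "gen_hom n M N f \<longleftrightarrow>
     f \<in> hom M N \<and> f \<one>\<^bsub>M\<^esub> = \<one>\<^bsub>N\<^esub> \<and>
     f ` carrier M = carrier N \<and>
     (\<forall>C \<in> carrier M. elem_len (f C) = elem_len C)"

end

theory Submission
  imports Defs
begin

lemma pres_ctx: "pres_eq R u v \<Longrightarrow> pres_eq R (p @ u @ s) (p @ v @ s)"
proof (induction rule: pres_eq.induct)
  case (pres_rel u v q t)
  have "pres_eq R ((p @ q) @ u @ (t @ s)) ((p @ q) @ v @ (t @ s))"
    using pres_rel by (rule pres_eq.pres_rel)
  then show ?case by simp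
qed (auto intro: pres_eq.intros)

lemma pres_app: "pres_eq R a a' \<Longrightarrow> pres_eq R b b' \<Longrightarrow> pres_eq R (a @ b) (a' @ b')"
proof -
  assume 1: "pres_eq R a a'" and 2: "pres_eq R b b'"
  have "pres_eq R ([] @ a @ b) ([] @ a' @ b)" using pres_ctx[OF 1] .
  moreover have "pres_eq R (a' @ b @ []) (a' @ b' @ [])" using pres_ctx[OF 2] .
  ultimately show ?thesis by (auto intro: pres_trans)
qed

lemma pres_mono: "pres_eq R1 u v \<Longrightarrow> (\<And>a b. (a,b) \<in> R1 \<Longrightarrow> pres_eq R2 a b) \<Longrightarrow> pres_eq R2 u v"
  by (induction rule: pres_eq.induct) (auto intro: pres_eq.intros pres_ctx)

lemma pres_len: "pres_eq R u v \<Longrightarrow> (\<And>a b. (a,b) \<in> R \<Longrightarrow> length a = length b) \<Longrightarrow> length u = length v"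
  by (induction rule: pres_eq.induct) auto

lemma cls_eq: "cls R u = cls R v \<longleftrightarrow> pres_eq R u v"
  unfolding cls_def
  by (auto intro: pres_eq.intros)

lemma rep_cls: "pres_eq R w (rep (cls R w))"
proof -
  have "w \<in> cls R w" by (simp add: cls_def pres_refl)
  hence "rep (cls R w) \<in> cls R w" unfolding rep_def by (rule someI)
  thus ?thesis by (simp add: cls_def)
qed

lemma elem_len_cls: "(\<And>a b. (a,b) \<in> R \<Longrightarrow> length a = length b) \<Longrightarrow> elem_len (cls R w) = length w"
proof -
  assume h: "\<And>a b. (a,b) \<in> R \<Longrightarrow> length a = length b"
  have "length w = length (rep (cls R w))" using pres_len[OF rep_cls h] .
  thus ?thesis unfolding elem_len_def by simp
qed

lemma generic:
  assumes sub: "\<And>a b. (a,b) \<in> R1 \<Longrightarrow> pres_eq R2 a b"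
    and h1: "\<And>a b. (a,b) \<in> R1 \<Longrightarrow> length a = length b"
    and h2: "\<And>a b. (a,b) \<in> R2 \<Longrightarrow> length a = length b"
  shows "(\<forall>i. (\<lambda>C. cls R2 (rep C)) (cls R1 [i]) = cls R2 [i]) \<and>
         gen_hom n (pres_monoid n R1) (pres_monoid n R2) (\<lambda>C. cls R2 (rep C))"
proof -
  let ?f = "\<lambda>C. cls R2 (rep C)"
  have key: "?f (cls R1 w) = cls R2 w" for w
    using pres_sym[OF pres_mono[OF rep_cls sub]] by (simp only: cls_eq)
  have mult: "?f (cls R1 (rep (cls R1 a) @ rep (cls R1 b))) =
      cls R2 (rep (cls R2 a) @ rep (cls R2 b))" for a b
  proof -
    have "?f (cls R1 (rep (cls R1 a) @ rep (cls R1 b))) = cls R2 (rep (cls R1 a) @ rep (cls R1 b))"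
      by (rule key)
    also have "\<dots> = cls R2 (a @ b)"
      using pres_sym[OF pres_app[OF pres_mono[OF rep_cls sub] pres_mono[OF rep_cls sub]]]
      by (simp only: cls_eq)
    also have "\<dots> = cls R2 (rep (cls R2 a) @ rep (cls R2 b))"
      using pres_app[OF rep_cls rep_cls] by (simp only: cls_eq)
    finally show ?thesis .
  qed
  let ?M = "pres_monoid n R1" and ?N = "pres_monoid n R2"
  have cM: "carrier ?M = {cls R1 w | w. set w \<subseteq> {1..n}}" by (simp add: pres_monoid_def)
  have cN: "carrier ?N = {cls R2 w | w. set w \<subseteq> {1..n}}" by (simp add: pres_monoid_def)
  have pi: "?f \<in> carrier ?M \<rightarrow> carrier ?N"
  proof
    fix C assume "C \<in> carrier ?M"
    then obtain w where "C = cls R1 w" "set w \<subseteq> {1..n}" using cM by auto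
    thus "?f C \<in> carrier ?N" using key cN by auto
  qed
  have hm: "?f (C \<otimes>\<^bsub>?M\<^esub> D) = ?f C \<otimes>\<^bsub>?N\<^esub> ?f D"
    if hC: "C \<in> carrier ?M" and hD: "D \<in> carrier ?M" for C D
  proof -
    obtain a where a: "C = cls R1 a" using hC cM by auto
    obtain b where b: "D = cls R1 b" using hD cM by auto
    show ?thesis using mult[of a b] key[of a] key[of b] unfolding a b
      by (simp add: pres_monoid_def)
  qed
  have hom: "?f \<in> hom ?M ?N" unfolding hom_def using pi hm by blast
  have one: "?f \<one>\<^bsub>?M\<^esub> = \<one>\<^bsub>?N\<^esub>" using key[of "[]"] by (simp add: pres_monoid_def)
  have img: "?f ` carrier ?M = carrier ?N"
  proof
    show "?f ` carrier ?M \<subseteq> carrier ?N" using pi by auto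
    show "carrier ?N \<subseteq> ?f ` carrier ?M"
    proof
      fix C assume "C \<in> carrier ?N"
      then obtain w where w: "C = cls R2 w" "set w \<subseteq> {1..n}" using cN by auto
      hence "cls R1 w \<in> carrier ?M" using cM by auto
      moreover have "?f (cls R1 w) = C" using key w by simp
      ultimately show "C \<in> ?f ` carrier ?M" by (metis image_eqI)
    qed
  qed
  have len: "\<forall>C \<in> carrier ?M. elem_len (?f C) = elem_len C"
  proof
    fix C assume "C \<in> carrier ?M"
    then obtain w where "C = cls R1 w" using cM by auto
    thus "elem_len (?f C) = elem_len C" using key elem_len_cls[OF h1] elem_len_cls[OF h2] by simp
  qed
  have k1: "\<forall>i. ?f (cls R1 [i]) = cls R2 [i]" using key by simp
  have "gen_hom n ?M ?N ?f" unfolding gen_hom_def using hom one img len by (intro conjI)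
  with k1 show ?thesis by (rule conjI)
qed

lemma alt_len: "length (alt i j r) = r"
  by (induction r arbitrary: i j) auto

lemma ra_memI: "i \<in> {1..rank T} \<Longrightarrow> j \<in> {1..rank T} \<Longrightarrow> i \<noteq> j \<Longrightarrow> lab T i j = 2 \<Longrightarrow> ([i,j],[j,i]) \<in> ra_rels T"
  unfolding ra_rels_def by blast

lemma K_sub: assumes "allowed_type T" shows "K_rels (rank T) \<subseteq> ra_rels T"
proof
  fix x assume "x \<in> K_rels (rank T)"
  then consider i j where "x = ([i,j],[j,i])" "1 \<le> j" "j + 2 \<le> i" "i \<le> rank T - 1"
    | k where "x = ([rank T,k],[k,rank T])" "1 \<le> k" "k + 3 \<le> rank T"
    unfolding K_rels_def by blast
  then show "x \<in> ra_rels T"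
  proof cases
    case 1
    have e: "lab T i j = lab0 T j i" using 1 by (simp add: lab_def)
    have "lab0 T j i = 2" using 1 assms
    proof (cases T)
      case (TD m) thus ?thesis using 1 by (simp; arith)
    qed (use 1 in simp_all)
    hence "lab T i j = 2" using e by simp
    thus ?thesis using 1 by (auto intro!: ra_memI)
  next
    case 2
    have e: "lab T (rank T) k = lab0 T k (rank T)" using 2 by (simp add: lab_def)
    have "lab0 T k (rank T) = 2" using 2 assms
    proof (cases T)
      case (TD m) thus ?thesis using 2 by (simp; arith)
    qed (use 2 in simp_all)
    hence "lab T (rank T) k = 2" using e by simp
    thus ?thesis using 2 by (auto intro!: ra_memI)
  qed
qed

theorem proposition1:
  fixes T :: cox_type
  assumes "allowed_type T"
  shows "\<exists>\<phi> \<psi>.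
     (\<forall>i \<in> {1..rank T}. \<phi> (cls (K_rels (rank T)) [i]) = cls (ra_rels T) [i]) \<and>
     gen_hom (rank T) (K_monoid (rank T)) (ra_monoid T) \<phi> \<and>
     (\<forall>i \<in> {1..rank T}. \<psi> (cls (ra_rels T) [i]) = cls (artin_rels T) [i]) \<and>
     gen_hom (rank T) (ra_monoid T) (artin_monoid T) \<psi>"
proof -
  have lK: "length a = length b" if "(a,b) \<in> K_rels n" for a b n
    using that by (auto simp: K_rels_def)
  have lR: "length a = length b" if "(a,b) \<in> ra_rels T" for a b
    using that by (auto simp: ra_rels_def)
  have lA: "length a = length b" if "(a,b) \<in> artin_rels T" for a b
    using that by (auto simp: artin_rels_def alt_len)
  have s1: "pres_eq (ra_rels T) a b" if "(a,b) \<in> K_rels (rank T)" for a b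
    using K_sub[OF assms] that pres_rel[of a b "ra_rels T" "[]" "[]"] by auto
  have s2: "pres_eq (artin_rels T) a b" if r: "(a,b) \<in> ra_rels T" for a b
  proof -
    obtain i j where ij: "a = [i,j]" "b = [j,i]" "i \<in> {1..rank T}" "j \<in> {1..rank T}"
        "i \<noteq> j" "lab T i j = 2"
      using r unfolding ra_rels_def by blast
    have e: "alt i j (lab T i j) = [i,j]" "alt j i (lab T i j) = [j,i]"
      using ij(6) by (simp_all add: numeral_2_eq_2)
    have "(alt i j (lab T i j), alt j i (lab T i j)) \<in> artin_rels T"
      unfolding artin_rels_def using ij(3-5) by blast
    hence "(a,b) \<in> artin_rels T" using e ij(1,2) by simp
    thus ?thesis using pres_rel[of a b "artin_rels T" "[]" "[]"] by auto
  qed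
  note g1 = generic[OF s1 lK[where n="rank T"] lR, where n="rank T"]
  note g2 = generic[OF s2 lR lA, where n="rank T"]
  show ?thesis
    apply (rule exI[where x="\<lambda>C. cls (ra_rels T) (rep C)"])
    apply (rule exI[where x="\<lambda>C. cls (artin_rels T) (rep C)"])
    using g1 g2 unfolding K_monoid_def ra_monoid_def artin_monoid_def by simp
qed

end
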